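(* In the setting of ONES (step $\theta>0$, $\widetilde w_1\in\triangle^n$ with positive entries, arbitrary $\ell_t,\widehat\ell_t\in\mathbb R^{n+1}$, updates $\widetilde w_{t+1}=\mathscr N(\widetilde w_t\circ e^{-\theta\ell_t})$, $w_{t+1}=\mathscr N(\widetilde w_{t+1}\circ e^{-\theta\widehat\ell_{t+1}})$), for every $T\ge1$ and every $w\in\triangle^n$, $$\sum_{t=1}^T\langle \ell_t,w_t-w\rangle\le \frac1\theta\sum_i w(i)\ln\frac{w(i)}{\widetilde w_1(i)}+\frac\theta2\sum_{t=1}^T h_{\|\ell_t\|_\infty}\big(\|\ell_t-\widehat\ell_t\|_\infty\big),$$ where $h_\sigma(\delta)=\delta^2-(|\delta|-|\sigma|)_+^2$.
   Context: $\triangle^n=\{w\in\mathbb R_+^{n+1}:\|w\|_1=1\}$; $\circ$ is the Hadamard product; $\mathscr N(u)=u/\|u\|_1$; $w_1=\mathscr N(\widetilde w_1\circ e^{-\theta\widehat\ell_1})$; $(a)_+=\max\{a,0\}$; $0\ln0=0$. *)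

theory Defs
  imports Complex_Main
begin

text \<open>Vectors in R^(n+1) are functions nat => real, only coordinates 0..n matter.\<close>

definition nrm :: "nat \<Rightarrow> (nat \<Rightarrow> real) \<Rightarrow> (nat \<Rightarrow> real)" where
  "nrm n u = (\<lambda>i. u i / (\<Sum>j\<le>n. \<bar>u j\<bar>))"

definition in_simplex :: "nat \<Rightarrow> (nat \<Rightarrow> real) \<Rightarrow> bool" where
  "in_simplex n w \<longleftrightarrow> (\<forall>i\<le>n. 0 \<le> w i) \<and> (\<Sum>i\<le>n. w i) = 1"

definition inner_n :: "nat \<Rightarrow> (nat \<Rightarrow> real) \<Rightarrow> (nat \<Rightarrow> real) \<Rightarrow> real" where
  "inner_n n u v = (\<Sum>i\<le>n. u i * v i)"

definition sup_norm :: "nat \<Rightarrow> (nat \<Rightarrow> real) \<Rightarrow> real" where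
  "sup_norm n u = Max ((\<lambda>i. \<bar>u i\<bar>) ` {..n})"

definition hfun :: "real \<Rightarrow> real \<Rightarrow> real" where
  "hfun \<sigma> \<delta> = \<delta>\<^sup>2 - (max (\<bar>\<delta>\<bar> - \<bar>\<sigma>\<bar>) 0)\<^sup>2"

text \<open>ones_wt n theta w1 l t = tilde w_t for t >= 1 (t = 0 also set to w1, unused).\<close>
fun ones_wt :: "nat \<Rightarrow> real \<Rightarrow> (nat \<Rightarrow> real) \<Rightarrow> (nat \<Rightarrow> nat \<Rightarrow> real) \<Rightarrow> nat \<Rightarrow> nat \<Rightarrow> real" where
  "ones_wt n \<theta> w1 l 0 = w1"
| "ones_wt n \<theta> w1 l (Suc 0) = w1"
| "ones_wt n \<theta> w1 l (Suc (Suc t)) =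
     nrm n (\<lambda>i. ones_wt n \<theta> w1 l (Suc t) i * exp (- \<theta> * l (Suc t) i))"

definition ones_w :: "nat \<Rightarrow> real \<Rightarrow> (nat \<Rightarrow> real) \<Rightarrow> (nat \<Rightarrow> nat \<Rightarrow> real) \<Rightarrow> (nat \<Rightarrow> nat \<Rightarrow> real) \<Rightarrow> nat \<Rightarrow> nat \<Rightarrow> real" where
  "ones_w n \<theta> w1 l lh t = nrm n (\<lambda>i. ones_wt n \<theta> w1 l t i * exp (- \<theta> * lh t i))"

end

theory Submission imports Defs "HOL-Probability.Hoeffding" begin

lemma hoef:
  fixes q y :: "nat \<Rightarrow> real"
  assumes q0: "\<forall>i\<le>n. q i \<ge> 0" and q1: "(\<Sum>i\<le>n. q i) = 1"
    and yb: "\<forall>i\<le>n. a \<le> y i \<and> y i \<le> b"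
  shows "ln (\<Sum>i\<le>n. q i * exp (y i)) \<le> (\<Sum>i\<le>n. q i * y i) + (b-a)^2/8"
proof -
  define \<mu> where "\<mu> = (\<Sum>i\<le>n. q i * y i)"
  have ab: "a \<le> b" using yb by auto
  have \<mu>a: "a \<le> \<mu>"
  proof -
    have "(\<Sum>i\<le>n. q i * a) \<le> \<mu>" unfolding \<mu>_def
      by (rule sum_mono) (use q0 yb in \<open>auto intro: mult_left_mono\<close>)
    thus ?thesis by (simp add: sum_distrib_right[symmetric] q1)
  qed
  have \<mu>b: "\<mu> \<le> b"
  proof -
    have "\<mu> \<le> (\<Sum>i\<le>n. q i * b)" unfolding \<mu>_def
      by (rule sum_mono) (use q0 yb in \<open>auto intro: mult_left_mono\<close>)
    thus ?thesis by (simp add: sum_distrib_right[symmetric] q1)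
  qed
  have pos: "0 < (\<Sum>i\<le>n. q i * exp (y i))"
  proof -
    have "(\<Sum>i\<le>n. q i * exp a) \<le> (\<Sum>i\<le>n. q i * exp (y i))"
      by (rule sum_mono) (use q0 yb in \<open>auto intro: mult_left_mono\<close>)
    moreover have "(\<Sum>i\<le>n. q i * exp a) = exp a" by (simp add: sum_distrib_right[symmetric] q1)
    ultimately show ?thesis by (smt (verit) exp_gt_zero)
  qed
  show ?thesis
  proof (cases "a = b")
    case True
    hence "\<forall>i\<le>n. y i = a" using yb by force
    hence "(\<Sum>i\<le>n. q i * exp (y i)) = exp a" "(\<Sum>i\<le>n. q i * y i) = a"
      by (simp_all add: sum_distrib_right[symmetric] q1)
    thus ?thesis by simp
  next
    case False
    hence h: "b - a > 0" using ab by simp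
    have cv: "convex_on UNIV exp" using convex_on_exp[of 1] by simp
    have ex: "exp (y i) \<le> ((b - y i) * exp a + (y i - a) * exp b) / (b - a)" if "i \<le> n" for i
    proof -
      define t where "t = (y i - a) / (b - a)"
      have t0: "0 \<le> t" "t \<le> 1" using yb that h by (auto simp: t_def divide_simps)
      have "exp ((1 - t) *\<^sub>R a + t *\<^sub>R b) \<le> (1 - t) * exp a + t * exp b"
        using convex_onD[OF cv t0] by simp
      moreover have "(1 - t) *\<^sub>R a + t *\<^sub>R b = y i"
      proof -
        have "t * (b - a) = y i - a" using h by (simp add: t_def)
        thus ?thesis by (simp add: algebra_simps)
      qed
      moreover have "(1 - t) * exp a + t * exp b = ((b - y i) * exp a + (y i - a) * exp b) / (b - a)"
      proof -
        have "1 - t = (b - y i)/(b-a)" using h by (simp add: t_def field_simps)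
        hence "(1 - t) * exp a + t * exp b = ((b - y i)/(b-a)) * exp a + ((y i - a) / (b - a)) * exp b"
          by (simp add: t_def)
        also have "\<dots> = ((b - y i) * exp a + (y i - a) * exp b) / (b - a)"
          by (simp add: add_divide_distrib)
        finally show ?thesis .
      qed
      ultimately show ?thesis by simp
    qed
    have "(\<Sum>i\<le>n. q i * exp (y i)) \<le> (\<Sum>i\<le>n. q i * (((b - y i) * exp a + (y i - a) * exp b) / (b - a)))"
      by (rule sum_mono) (use q0 ex in \<open>auto intro!: mult_left_mono simp del: times_divide_eq_right\<close>)
    also have "\<dots> = ((b - \<mu>) * exp a + (\<mu> - a) * exp b) / (b - a)"
    proof -
      have "(\<Sum>i\<le>n. q i * (((b - y i) * exp a + (y i - a) * exp b) / (b - a)))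
          = (\<Sum>i\<le>n. (b * exp a - a * exp b) * q i + (exp b - exp a) * (q i * y i)) / (b - a)"
        unfolding sum_divide_distrib by (rule sum.cong) (simp_all add: algebra_simps)
      also have "(\<Sum>i\<le>n. (b * exp a - a * exp b) * q i + (exp b - exp a) * (q i * y i))
          = (b * exp a - a * exp b) + (exp b - exp a) * \<mu>"
        unfolding \<mu>_def by (simp add: sum.distrib sum_distrib_left[symmetric] q1)
      finally show ?thesis by (simp add: algebra_simps)
    qed
    also have "\<dots> = exp a * (1 + ((\<mu> - a)/(b-a)) * (exp (b - a) - 1))"
      using h by (simp add: field_simps exp_diff)
    finally have le: "(\<Sum>i\<le>n. q i * exp (y i)) \<le> exp a * (1 + ((\<mu> - a)/(b-a)) * (exp (b - a) - 1))" .
    have p0: "(\<mu> - a)/(b-a) \<ge> 0" using \<mu>a h by simp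
    have pp: "1 + ((\<mu> - a)/(b-a)) * (exp (b - a) - 1) > 0"
      using p0 h by (smt (verit) exp_ge_add_one_self mult_nonneg_nonneg)
    have aux: "-(b-a) * ((\<mu> - a)/(b-a)) + ln (1 + ((\<mu> - a)/(b-a)) * (exp (b - a) - 1)) \<le> (b-a)^2/8"
      using Hoeffdings_lemma_aux[of "b-a" "(\<mu> - a)/(b-a)"] h p0 by simp
    have "ln (\<Sum>i\<le>n. q i * exp (y i)) \<le> ln (exp a * (1 + ((\<mu> - a)/(b-a)) * (exp (b - a) - 1)))"
      using le pos pp by simp
    also have "\<dots> = a + ln (1 + ((\<mu> - a)/(b-a)) * (exp (b - a) - 1))"
      using pp by (simp add: ln_mult)
    also have "\<dots> \<le> \<mu> + (b-a)^2/8"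
    proof -
      have "(b-a)*((\<mu>-a)/(b-a)) = \<mu> - a" using h by simp
      thus ?thesis using aux by linarith
    qed
    finally show ?thesis unfolding \<mu>_def .
  qed
qed

lemma dv:
  fixes q r f :: "nat \<Rightarrow> real"
  assumes q0: "\<forall>i\<le>n. q i > 0" and q1: "(\<Sum>i\<le>n. q i) = 1"
    and r0: "\<forall>i\<le>n. r i \<ge> 0" and r1: "(\<Sum>i\<le>n. r i) = 1"
  shows "(\<Sum>i\<le>n. r i * f i) \<le> (\<Sum>i\<le>n. r i * ln (r i / q i)) + ln (\<Sum>i\<le>n. q i * exp (f i))"
proof -
  define Z where "Z = (\<Sum>i\<le>n. q i * exp (f i))"
  have Z0: "Z > 0" unfolding Z_def
    by (rule sum_pos) (use q0 in auto)
  have each: "r i * f i - r i * ln (r i / q i) - r i * ln Z \<le> q i * exp (f i) / Z - r i" if "i \<le> n" for i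
  proof (cases "r i = 0")
    case True
    have "q i > 0" using q0 that by simp
    thus ?thesis using True Z0 by simp
  next
    case False
    have "r i \<ge> 0" using r0 that by simp
    hence rp: "r i > 0" using False by simp
    have qi: "q i > 0" using q0 that by simp
    have "ln (q i * exp (f i) / (Z * r i)) \<le> q i * exp (f i) / (Z * r i) - 1"
      by (rule ln_le_minus_one) (use rp qi Z0 in simp)
    moreover have "ln (q i * exp (f i) / (Z * r i)) = ln (q i) + f i - ln Z - ln (r i)"
      using rp qi Z0 by (simp add: ln_mult ln_div)
    moreover have "ln (r i / q i) = ln (r i) - ln (q i)" using rp qi by (simp add: ln_div)
    ultimately have "f i - ln (r i / q i) - ln Z \<le> q i * exp (f i) / (Z * r i) - 1" by simp
    from mult_left_mono[OF this, of "r i"] rp show ?thesis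
      by (simp add: algebra_simps)
  qed
  have "(\<Sum>i\<le>n. r i * f i - r i * ln (r i / q i) - r i * ln Z) \<le> (\<Sum>i\<le>n. q i * exp (f i) / Z - r i)"
    by (rule sum_mono) (use each in auto)
  also have "\<dots> = 0" using Z0 by (simp add: sum_subtractf sum_divide_distrib[symmetric] Z_def[symmetric] r1)
  finally show ?thesis
    by (simp add: sum_subtractf sum_distrib_right[symmetric] r1 Z_def[symmetric])
qed


lemma sup_norm_ge: "i \<le> n \<Longrightarrow> \<bar>u i\<bar> \<le> sup_norm n u"
  unfolding sup_norm_def by (rule Max_ge) auto

lemma sup_norm_nonneg: "0 \<le> sup_norm n u"
  using sup_norm_ge[of 0 n u] by simp

lemma step:
  fixes p l lh :: "nat \<Rightarrow> real"
  assumes th: "\<theta> > 0" and p0: "\<forall>i\<le>n. p i > 0" and p1: "(\<Sum>i\<le>n. p i) = 1"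
  shows "\<theta> * inner_n n l (nrm n (\<lambda>i. p i * exp (-\<theta> * lh i))) + ln (\<Sum>i\<le>n. p i * exp (-\<theta> * l i))
    \<le> \<theta>^2/2 * hfun (sup_norm n l) (sup_norm n (\<lambda>i. l i - lh i))"
proof -
  define \<sigma> where "\<sigma> = sup_norm n l"
  define d where "d = (\<lambda>i. l i - lh i)"
  define \<delta> where "\<delta> = sup_norm n d"
  have lb: "\<bar>l i\<bar> \<le> \<sigma>" if "i \<le> n" for i using sup_norm_ge[OF that] \<sigma>_def by simp
  have db: "\<bar>d i\<bar> \<le> \<delta>" if "i \<le> n" for i using sup_norm_ge[OF that] \<delta>_def by simp
  have \<sigma>0: "\<sigma> \<ge> 0" "\<delta> \<ge> 0" using sup_norm_nonneg \<sigma>_def \<delta>_def by auto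
  define s0 where "s0 = (if \<delta> \<le> \<sigma> then 1 else \<sigma> / \<delta>)"
  have s0: "0 \<le> s0" "s0 \<le> 1" using \<sigma>0 by (auto simp: s0_def)
  define y where "y = (\<lambda>i. l i - s0 * d i)"
  define Zy where "Zy = (\<Sum>i\<le>n. p i * exp (-\<theta> * y i))"
  have Zy0: "Zy > 0" unfolding Zy_def by (rule sum_pos) (use p0 in auto)
  define q where "q = (\<lambda>i. p i * exp (-\<theta> * y i) / Zy)"
  have q0: "\<forall>i\<le>n. q i > 0" using p0 Zy0 by (auto simp: q_def)
  have q1: "(\<Sum>i\<le>n. q i) = 1"
  proof -
    have "(\<Sum>i\<le>n. q i) = (\<Sum>i\<le>n. p i * exp (-\<theta> * y i)) / Zy"
      unfolding q_def by (rule sum_divide_distrib[symmetric])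
    thus ?thesis using Zy0 unfolding Zy_def by simp
  qed
  define a where "a = \<theta> * (1 - s0)"
  have a0: "a \<ge> 0" using th s0 by (simp add: a_def)
  define E where "E = (\<Sum>i\<le>n. q i * exp (a * d i))"
  have E0: "E > 0" unfolding E_def by (rule sum_pos) (use q0 in auto)
  define q' where "q' = (\<lambda>i. q i * exp (a * d i) / E)"
  have q'0: "\<forall>i\<le>n. q' i > 0" using q0 E0 by (auto simp: q'_def)
  have q'1: "(\<Sum>i\<le>n. q' i) = 1"
  proof -
    have "(\<Sum>i\<le>n. q' i) = (\<Sum>i\<le>n. q i * exp (a * d i)) / E"
      unfolding q'_def by (rule sum_divide_distrib[symmetric])
    thus ?thesis using E0 unfolding E_def by simp
  qed
  have ex1: "p i * exp (-\<theta> * lh i) = Zy * E * q' i" for i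
  proof -
    have "-\<theta> * lh i = -\<theta> * y i + a * d i" by (simp add: y_def d_def a_def algebra_simps)
    hence "exp (-\<theta> * lh i) = exp (-\<theta> * y i) * exp (a * d i)" by (simp only: exp_add)
    thus ?thesis using Zy0 E0 by (simp add: q'_def q_def)
  qed
  have I1: "nrm n (\<lambda>i. p i * exp (-\<theta> * lh i)) = q'"
  proof
    fix i
    have "(\<Sum>j\<le>n. \<bar>p j * exp (-\<theta> * lh j)\<bar>) = (\<Sum>j\<le>n. Zy * E * q' j)"
      by (rule sum.cong) (use Zy0 E0 q'0 ex1 in auto)
    also have "\<dots> = Zy * E" by (simp add: sum_distrib_left[symmetric] q'1)
    finally show "nrm n (\<lambda>i. p i * exp (-\<theta> * lh i)) i = q' i"
      unfolding nrm_def using ex1[of i] Zy0 E0 by simp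
  qed
  have I2: "(\<Sum>i\<le>n. p i * exp (-\<theta> * l i)) = Zy * (\<Sum>i\<le>n. q i * exp (-\<theta> * s0 * d i))"
  proof -
    have "p i * exp (-\<theta> * l i) = Zy * (q i * exp (-\<theta> * s0 * d i))" for i
    proof -
      have "-\<theta> * l i = -\<theta> * y i + (-\<theta> * s0 * d i)" by (simp add: y_def algebra_simps)
      hence "exp (-\<theta> * l i) = exp (-\<theta> * y i) * exp (-\<theta> * s0 * d i)" by (simp only: exp_add)
      thus ?thesis using Zy0 by (simp add: q_def)
    qed
    thus ?thesis by (simp add: sum_distrib_left)
  qed
  define Sql where "Sql = (\<Sum>i\<le>n. q i * l i)"
  define Sqd where "Sqd = (\<Sum>i\<le>n. q i * d i)"
  define Sqy where "Sqy = (\<Sum>i\<le>n. q i * y i)"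
  have Sqly: "Sql = Sqy + s0 * Sqd"
    by (simp add: Sql_def Sqy_def Sqd_def y_def algebra_simps sum.distrib sum_distrib_left sum_subtractf)
  have Ha: "ln (\<Sum>i\<le>n. q i * exp (-\<theta> * s0 * d i)) \<le> - \<theta> * s0 * Sqd + (2*\<theta>* s0*\<delta>)^2/8"
  proof -
    have "ln (\<Sum>i\<le>n. q i * exp (-\<theta> * s0 * d i)) \<le> (\<Sum>i\<le>n. q i * (-\<theta> * s0 * d i)) + (\<theta>* s0*\<delta> - (-\<theta>* s0*\<delta>))^2/8"
    proof (rule hoef)
      show "\<forall>i\<le>n. 0 \<le> q i" using q0 by auto
      show "(\<Sum>i\<le>n. q i) = 1" by (rule q1)
      show "\<forall>i\<le>n. - \<theta> * s0 * \<delta> \<le> - \<theta> * s0 * d i \<and> - \<theta> * s0 * d i \<le> \<theta> * s0 * \<delta>"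
      proof (intro allI impI)
        fix i assume "i \<le> n"
        hence "\<bar>d i\<bar> \<le> \<delta>" by (rule db)
        hence "\<bar>\<theta> * s0 * d i\<bar> \<le> \<theta> * s0 * \<delta>" using th s0
          by (simp add: abs_mult mult_left_mono)
        thus "- \<theta> * s0 * \<delta> \<le> - \<theta> * s0 * d i \<and> - \<theta> * s0 * d i \<le> \<theta> * s0 * \<delta>" by (simp add: abs_le_iff)
      qed
    qed
    moreover have "(\<Sum>i\<le>n. q i * (-\<theta> * s0 * d i)) = - \<theta> * s0 * Sqd"
      by (simp add: Sqd_def sum_distrib_left algebra_simps)
    moreover have "(\<theta> * s0 * \<delta> - (-\<theta> * s0 * \<delta>))^2/8 = (2*\<theta> * s0*\<delta>)^2/8"
      by (simp add: algebra_simps)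
    ultimately show ?thesis by linarith
  qed
  have KL: "0 \<le> - \<theta> * Sqy - ln Zy"
  proof -
    have "(\<Sum>i\<le>n. q i * 0) \<le> (\<Sum>i\<le>n. q i * ln (q i / p i)) + ln (\<Sum>i\<le>n. p i * exp 0)"
      by (rule dv) (use p0 p1 q0 q1 in auto)
    moreover have "(\<Sum>i\<le>n. q i * ln (q i / p i)) = (\<Sum>i\<le>n. q i * (-\<theta> * y i - ln Zy))"
    proof (rule sum.cong)
      fix i assume "i \<in> {..n}"
      hence "p i > 0" using p0 by auto
      hence "q i / p i = exp (-\<theta> * y i) / Zy" by (simp add: q_def)
      thus "q i * ln (q i / p i) = q i * (-\<theta> * y i - ln Zy)" using Zy0 by (simp add: ln_div)
    qed simp
    moreover have "(\<Sum>i\<le>n. q i * (-\<theta> * y i - ln Zy)) = - \<theta> * Sqy - ln Zy"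
    proof -
      have "(\<Sum>i\<le>n. q i * (-\<theta> * y i - ln Zy)) = - \<theta> * (\<Sum>i\<le>n. q i * y i) - (\<Sum>i\<le>n. q i) * ln Zy"
        by (simp add: algebra_simps sum_subtractf sum_distrib_left sum_distrib_right)
      thus ?thesis by (simp add: q1 Sqy_def)
    qed
    ultimately show ?thesis using p1 by simp
  qed
  have PA: "\<theta> * Sql + ln (\<Sum>i\<le>n. p i * exp (-\<theta> * l i)) \<le> \<theta>^2 * s0^2 * \<delta>^2 / 2"
  proof -
    have "ln (\<Sum>i\<le>n. p i * exp (-\<theta> * l i)) = ln Zy + ln (\<Sum>i\<le>n. q i * exp (-\<theta> * s0 * d i))"
    proof -
      have "(\<Sum>i\<le>n. q i * exp (-\<theta> * s0 * d i)) > 0" by (rule sum_pos) (use q0 in auto)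
      thus ?thesis unfolding I2 using Zy0 by (simp add: ln_mult)
    qed
    thus ?thesis using Ha KL Sqly by (simp add: power_mult_distrib algebra_simps)
  qed
  define Sq'l where "Sq'l = (\<Sum>i\<le>n. q' i * l i)"
  have PB: "Sq'l - Sql \<le> a * \<delta> * \<sigma>"
  proof (cases "a * \<delta> = 0 \<or> \<sigma> = 0")
    case True
    show ?thesis
    proof (cases "\<sigma> = 0")
      case True
      hence "\<forall>i\<le>n. l i = 0" using lb by force
      thus ?thesis using True by (simp add: Sq'l_def Sql_def)
    next
      case False
      hence ad: "a * \<delta> = 0" using True by simp
      have "\<forall>i\<le>n. a * d i = 0"
      proof (intro allI impI)
        fix i assume "i \<le> n"
        show "a * d i = 0"
        proof (cases "a = 0")
          case False hence "\<delta> = 0" using ad by simp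
          thus ?thesis using db[OF \<open>i \<le> n\<close>] by simp
        qed simp
      qed
      hence "E = (\<Sum>i\<le>n. q i)" unfolding E_def by (intro sum.cong) auto
      hence "E = 1" using q1 by simp
      hence "\<forall>i\<le>n. q' i = q i" using \<open>\<forall>i\<le>n. a * d i = 0\<close> by (simp add: q'_def)
      hence "Sq'l = Sql" unfolding Sq'l_def Sql_def by simp
      thus ?thesis using ad by auto
    qed
  next
    case False
    hence ap: "a > 0" and dp: "\<delta> > 0" and sp: "\<sigma> > 0" using a0 \<sigma>0 by auto
    define lam where "lam = a * \<delta> / \<sigma>"
    have lp: "lam > 0" using ap dp sp by (simp add: lam_def)
    have ls: "lam * \<sigma> = a * \<delta>" using sp by (simp add: lam_def)
    have D: "(\<Sum>i\<le>n. q' i * (lam * l i)) \<le> (\<Sum>i\<le>n. q' i * ln (q' i / q i)) + ln (\<Sum>i\<le>n. q i * exp (lam * l i))"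
      by (rule dv) (use q0 q1 q'0 q'1 in auto)
    have D1: "(\<Sum>i\<le>n. q' i * ln (q' i / q i)) = a * (\<Sum>i\<le>n. q' i * d i) - ln E"
    proof -
      have "(\<Sum>i\<le>n. q' i * ln (q' i / q i)) = (\<Sum>i\<le>n. q' i * (a * d i - ln E))"
      proof (rule sum.cong)
        fix i assume "i \<in> {..n}"
        hence "q i > 0" using q0 by auto
        hence "q' i / q i = exp (a * d i) / E" by (simp add: q'_def)
        thus "q' i * ln (q' i / q i) = q' i * (a * d i - ln E)" using E0 by (simp add: ln_div)
      qed simp
      also have "\<dots> = a * (\<Sum>i\<le>n. q' i * d i) - (\<Sum>i\<le>n. q' i) * ln E"
        by (simp add: algebra_simps sum_subtractf sum_distrib_left sum_distrib_right)
      finally show ?thesis by (simp add: q'1)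
    qed
    have H1: "ln (\<Sum>i\<le>n. q' i * exp (- a * d i)) \<le> (\<Sum>i\<le>n. q' i * (- a * d i)) + (a*\<delta> - (-a*\<delta>))^2/8"
    proof (rule hoef)
      show "\<forall>i\<le>n. 0 \<le> q' i" using q'0 by auto
      show "(\<Sum>i\<le>n. q' i) = 1" by (rule q'1)
      show "\<forall>i\<le>n. - a * \<delta> \<le> - a * d i \<and> - a * d i \<le> a * \<delta>"
      proof (intro allI impI)
        fix i assume "i \<le> n"
        hence "\<bar>d i\<bar> \<le> \<delta>" by (rule db)
        hence "\<bar>a * d i\<bar> \<le> a * \<delta>" using a0 by (simp add: abs_mult mult_left_mono)
        thus "- a * \<delta> \<le> - a * d i \<and> - a * d i \<le> a * \<delta>" by (simp add: abs_le_iff)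
      qed
    qed
    have H1e: "(\<Sum>i\<le>n. q' i * exp (- a * d i)) = 1 / E"
    proof -
      have "(\<Sum>i\<le>n. q' i * exp (- a * d i)) = (\<Sum>i\<le>n. q i / E)"
        by (rule sum.cong) (simp_all add: q'_def exp_minus field_simps)
      thus ?thesis by (simp add: sum_divide_distrib[symmetric] q1)
    qed
    have H1s: "(\<Sum>i\<le>n. q' i * (- a * d i)) = - a * (\<Sum>i\<le>n. q' i * d i)"
      by (simp add: sum_distrib_left algebra_simps)
    have H2: "ln (\<Sum>i\<le>n. q i * exp (lam * l i)) \<le> (\<Sum>i\<le>n. q i * (lam * l i)) + (lam*\<sigma> - (-lam*\<sigma>))^2/8"
    proof (rule hoef)
      show "\<forall>i\<le>n. 0 \<le> q i" using q0 by auto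
      show "(\<Sum>i\<le>n. q i) = 1" by (rule q1)
      show "\<forall>i\<le>n. - lam * \<sigma> \<le> lam * l i \<and> lam * l i \<le> lam * \<sigma>"
      proof (intro allI impI)
        fix i assume "i \<le> n"
        hence "\<bar>l i\<bar> \<le> \<sigma>" by (rule lb)
        hence "\<bar>lam * l i\<bar> \<le> lam * \<sigma>" using lp by (simp add: abs_mult mult_left_mono)
        thus "- lam * \<sigma> \<le> lam * l i \<and> lam * l i \<le> lam * \<sigma>" by (simp add: abs_le_iff)
      qed
    qed
    have H2s: "(\<Sum>i\<le>n. q i * (lam * l i)) = lam * Sql"
      by (simp add: Sql_def sum_distrib_left algebra_simps)
    have Ds: "(\<Sum>i\<le>n. q' i * (lam * l i)) = lam * Sq'l"
      by (simp add: Sq'l_def sum_distrib_left algebra_simps)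
    have lnE: "ln (1 / E) = - ln E" using E0 by (simp add: ln_div)
    have "lam * (Sq'l - Sql) \<le> (a*\<delta>)^2/2 + (lam*\<sigma>)^2/2"
      using D D1 H1 H1e H1s H2 H2s Ds lnE by (simp add: power_mult_distrib algebra_simps)
    also have "\<dots> = lam * (a * \<delta> * \<sigma>)" using ls by (simp add: power2_eq_square algebra_simps)
    finally show ?thesis using lp by simp
  qed
  have inner: "inner_n n l (nrm n (\<lambda>i. p i * exp (-\<theta> * lh i))) = Sq'l"
    unfolding I1 inner_n_def Sq'l_def by (simp add: mult.commute)
  have main: "\<theta> * Sq'l + ln (\<Sum>i\<le>n. p i * exp (-\<theta> * l i)) \<le> \<theta>^2 * (1 - s0) * \<delta> * \<sigma> + \<theta>^2 * s0^2 * \<delta>^2 / 2"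
  proof -
    have "\<theta> * (Sq'l - Sql) \<le> \<theta> * (a * \<delta> * \<sigma>)" using PB th by simp
    thus ?thesis using PA by (simp add: a_def power2_eq_square algebra_simps)
  qed
  have fin: "\<theta>^2 * (1 - s0) * \<delta> * \<sigma> + \<theta>^2 * s0^2 * \<delta>^2 / 2 \<le> \<theta>^2/2 * hfun \<sigma> \<delta>"
  proof (cases "\<delta> \<le> \<sigma>")
    case True
    thus ?thesis using \<sigma>0 by (simp add: s0_def hfun_def)
  next
    case False
    hence dp: "\<delta> > 0" using \<sigma>0 by simp
    have h: "hfun \<sigma> \<delta> = 2 * \<delta> * \<sigma> - \<sigma>^2" using False \<sigma>0
      by (simp add: hfun_def power2_eq_square algebra_simps)
    have e1: "(1 - \<sigma> / \<delta>) * \<delta> = \<delta> - \<sigma>" using dp by (simp add: field_simps)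
    have e2: "(\<sigma> / \<delta>)^2 * \<delta>^2 = \<sigma>^2" using dp by (simp add: field_simps)
    have "\<theta>^2 * (1 - s0) * \<delta> * \<sigma> + \<theta>^2 * s0^2 * \<delta>^2 / 2
        = \<theta>^2 * ((1 - \<sigma> / \<delta>) * \<delta>) * \<sigma> + \<theta>^2 * ((\<sigma> / \<delta>)^2 * \<delta>^2) / 2"
      using False by (simp add: s0_def)
    also have "\<dots> = \<theta>^2/2 * hfun \<sigma> \<delta>" unfolding e1 e2 h by (simp add: power2_eq_square algebra_simps)
    finally show ?thesis by simp
  qed
  show ?thesis using main fin inner \<sigma>_def \<delta>_def d_def by simp
qed


lemma wt_closed:
  assumes p0: "\<forall>i\<le>n. w1 i > 0" and p1: "(\<Sum>i\<le>n. w1 i) = 1"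
  shows "ones_wt n \<theta> w1 l (Suc T) = (\<lambda>i. w1 i * exp (-\<theta> * (\<Sum>t=1..T. l t i)) /
           (\<Sum>j\<le>n. w1 j * exp (-\<theta> * (\<Sum>t=1..T. l t j))))"
proof (induction T)
  case 0
  show ?case using p1 by simp
next
  case (Suc T)
  define S where "S = (\<Sum>j\<le>n. w1 j * exp (-\<theta> * (\<Sum>t=1..T. l t j)))"
  have S0: "S > 0" unfolding S_def by (rule sum_pos) (use p0 in auto)
  have ee: "w1 i * exp (-\<theta> * (\<Sum>t=1..T. l t i)) / S * exp (- \<theta> * l (Suc T) i)
      = w1 i * exp (-\<theta> * (\<Sum>t=1..Suc T. l t i)) / S" for i
  proof -
    have "-\<theta> * (\<Sum>t=1..Suc T. l t i) = -\<theta> * (\<Sum>t=1..T. l t i) + (- \<theta> * l (Suc T) i)"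
      by (simp add: algebra_simps)
    hence "exp (-\<theta> * (\<Sum>t=1..Suc T. l t i)) = exp (-\<theta> * (\<Sum>t=1..T. l t i)) * exp (- \<theta> * l (Suc T) i)"
      by (simp only: exp_add)
    thus ?thesis by simp
  qed
  define S' where "S' = (\<Sum>j\<le>n. w1 j * exp (-\<theta> * (\<Sum>t=1..Suc T. l t j)))"
  have S'0: "S' > 0" unfolding S'_def by (rule sum_pos) (use p0 in auto)
  have sabs: "(\<Sum>j\<le>n. \<bar>w1 j * exp (-\<theta> * (\<Sum>t=1..Suc T. l t j)) / S\<bar>) = S' / S"
  proof -
    have "(\<Sum>j\<le>n. \<bar>w1 j * exp (-\<theta> * (\<Sum>t=1..Suc T. l t j)) / S\<bar>)
        = (\<Sum>j\<le>n. w1 j * exp (-\<theta> * (\<Sum>t=1..Suc T. l t j)) / S)"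
      by (rule sum.cong) (use p0 S0 in auto)
    also have "\<dots> = S' / S" unfolding S'_def by (rule sum_divide_distrib[symmetric])
    finally show ?thesis .
  qed
  have "ones_wt n \<theta> w1 l (Suc (Suc T)) = nrm n (\<lambda>i. w1 i * exp (-\<theta> * (\<Sum>t=1..Suc T. l t i)) / S)"
  proof -
    have "ones_wt n \<theta> w1 l (Suc (Suc T)) = nrm n (\<lambda>i. ones_wt n \<theta> w1 l (Suc T) i * exp (- \<theta> * l (Suc T) i))"
      by simp
    also have "(\<lambda>i. ones_wt n \<theta> w1 l (Suc T) i * exp (- \<theta> * l (Suc T) i))
       = (\<lambda>i. w1 i * exp (-\<theta> * (\<Sum>t=1..Suc T. l t i)) / S)"
      unfolding Suc.IH S_def[symmetric] using ee by (intro ext) simp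
    finally show ?thesis .
  qed
  also have "\<dots> = (\<lambda>i. w1 i * exp (-\<theta> * (\<Sum>t=1..Suc T. l t i)) / S')"
    unfolding nrm_def sabs using S0 S'0 by (simp add: S'_def)
  finally show ?case unfolding S'_def .
qed

lemma main_ind:
  assumes th: "\<theta> > 0" and p0: "\<forall>i\<le>n. w1 i > 0" and p1: "(\<Sum>i\<le>n. w1 i) = 1"
  shows "(\<Sum>t=1..T. inner_n n (l t) (ones_w n \<theta> w1 l lh t))
    \<le> - (1/\<theta>) * ln (\<Sum>j\<le>n. w1 j * exp (-\<theta> * (\<Sum>t=1..T. l t j)))
      + (\<theta> / 2) * (\<Sum>t=1..T. hfun (sup_norm n (l t)) (sup_norm n (\<lambda>i. l t i - lh t i)))"
proof (induction T)
  case 0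
  show ?case using p1 by simp
next
  case (Suc T)
  define S where "S = (\<Sum>j\<le>n. w1 j * exp (-\<theta> * (\<Sum>t=1..T. l t j)))"
  have S0: "S > 0" unfolding S_def by (rule sum_pos) (use p0 in auto)
  define S' where "S' = (\<Sum>j\<le>n. w1 j * exp (-\<theta> * (\<Sum>t=1..Suc T. l t j)))"
  have S'0: "S' > 0" unfolding S'_def by (rule sum_pos) (use p0 in auto)
  define p where "p = ones_wt n \<theta> w1 l (Suc T)"
  have pdef: "p = (\<lambda>i. w1 i * exp (-\<theta> * (\<Sum>t=1..T. l t i)) / S)"
    unfolding p_def S_def by (rule wt_closed[OF p0 p1])
  have pp: "\<forall>i\<le>n. p i > 0" using p0 S0 by (simp add: pdef)
  have ps: "(\<Sum>i\<le>n. p i) = 1"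
    unfolding pdef sum_divide_distrib[symmetric] using S0 by (simp add: S_def)
  have st: "\<theta> * inner_n n (l (Suc T)) (nrm n (\<lambda>i. p i * exp (-\<theta> * lh (Suc T) i)))
       + ln (\<Sum>i\<le>n. p i * exp (-\<theta> * l (Suc T) i))
     \<le> \<theta>^2/2 * hfun (sup_norm n (l (Suc T))) (sup_norm n (\<lambda>i. l (Suc T) i - lh (Suc T) i))"
    by (rule step[OF th pp ps])
  have wdef: "ones_w n \<theta> w1 l lh (Suc T) = nrm n (\<lambda>i. p i * exp (-\<theta> * lh (Suc T) i))"
    unfolding ones_w_def p_def by simp
  have ee: "p i * exp (- \<theta> * l (Suc T) i) = w1 i * exp (-\<theta> * (\<Sum>t=1..Suc T. l t i)) / S" for i
  proof -
    have "-\<theta> * (\<Sum>t=1..Suc T. l t i) = -\<theta> * (\<Sum>t=1..T. l t i) + (- \<theta> * l (Suc T) i)"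
      by (simp add: algebra_simps)
    hence "exp (-\<theta> * (\<Sum>t=1..Suc T. l t i)) = exp (-\<theta> * (\<Sum>t=1..T. l t i)) * exp (- \<theta> * l (Suc T) i)"
      by (simp only: exp_add)
    thus ?thesis by (simp add: pdef)
  qed
  have sum': "(\<Sum>i\<le>n. p i * exp (-\<theta> * l (Suc T) i)) = S' / S"
    unfolding ee S'_def by (rule sum_divide_distrib[symmetric])
  have lnq: "ln (\<Sum>i\<le>n. p i * exp (-\<theta> * l (Suc T) i)) = ln S' - ln S"
    unfolding sum' using S0 S'0 by (simp add: ln_div)
  define H where "H = hfun (sup_norm n (l (Suc T))) (sup_norm n (\<lambda>i. l (Suc T) i - lh (Suc T) i))"
  define I where "I = inner_n n (l (Suc T)) (ones_w n \<theta> w1 l lh (Suc T))"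
  have "\<theta> * I + (ln S' - ln S) \<le> \<theta>^2/2 * H"
    using st lnq wdef unfolding I_def H_def by simp
  hence Ib: "I \<le> - (1/\<theta>) * (ln S' - ln S) + \<theta>/2 * H"
    using th by (simp add: field_simps power2_eq_square)
  have "(\<Sum>t=1..Suc T. inner_n n (l t) (ones_w n \<theta> w1 l lh t))
      = (\<Sum>t=1..T. inner_n n (l t) (ones_w n \<theta> w1 l lh t)) + I"
    by (simp add: I_def)
  also have "\<dots> \<le> - (1/\<theta>) * ln S + (\<theta> / 2) * (\<Sum>t=1..T. hfun (sup_norm n (l t)) (sup_norm n (\<lambda>i. l t i - lh t i)))
      + (- (1/\<theta>) * (ln S' - ln S) + \<theta>/2 * H)"
    using Suc.IH Ib unfolding S_def by linarith
  also have "\<dots> = - (1/\<theta>) * ln S' + (\<theta> / 2) * (\<Sum>t=1..Suc T. hfun (sup_norm n (l t)) (sup_norm n (\<lambda>i. l t i - lh t i)))"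
    by (simp add: H_def algebra_simps)
  finally show ?case unfolding S'_def .
qed


theorem corollary3:
  fixes n :: nat and \<theta> :: real and w1 w :: "nat \<Rightarrow> real"
    and l lh :: "nat \<Rightarrow> nat \<Rightarrow> real" and T :: nat
  assumes "\<theta> > 0"
    and "in_simplex n w1" and "\<forall>i\<le>n. w1 i > 0"
    and "T \<ge> 1"
    and "in_simplex n w"
  shows "(\<Sum>t=1..T. inner_n n (l t) (\<lambda>i. ones_w n \<theta> w1 l lh t i - w i))
    \<le> (1 / \<theta>) * (\<Sum>i\<le>n. w i * ln (w i / w1 i))
      + (\<theta> / 2) * (\<Sum>t=1..T. hfun (sup_norm n (l t)) (sup_norm n (\<lambda>i. l t i - lh t i)))"
proof -
  note th = assms(1)
  have p1: "(\<Sum>i\<le>n. w1 i) = 1" using assms(2) by (simp add: in_simplex_def)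
  have r0: "\<forall>i\<le>n. w i \<ge> 0" and r1: "(\<Sum>i\<le>n. w i) = 1" using assms(5) by (auto simp: in_simplex_def)
  define L where "L = (\<lambda>i. \<Sum>t=1..T. l t i)"
  define S where "S = (\<Sum>j\<le>n. w1 j * exp (-\<theta> * L j))"
  define HS where "HS = (\<Sum>t=1..T. hfun (sup_norm n (l t)) (sup_norm n (\<lambda>i. l t i - lh t i)))"
  define A where "A = (\<Sum>t=1..T. inner_n n (l t) (ones_w n \<theta> w1 l lh t))"
  define B where "B = (\<Sum>i\<le>n. w i * L i)"
  define K where "K = (\<Sum>i\<le>n. w i * ln (w i / w1 i))"
  have Ab: "A \<le> - (1/\<theta>) * ln S + (\<theta> / 2) * HS"
    unfolding A_def S_def HS_def L_def by (rule main_ind[OF th assms(3) p1])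
  have dvv: "(\<Sum>i\<le>n. w i * (-\<theta> * L i)) \<le> K + ln S"
    unfolding K_def S_def by (rule dv) (use assms(3) p1 r0 r1 in auto)
  have "(\<Sum>i\<le>n. w i * (-\<theta> * L i)) = -\<theta> * B"
    by (simp add: B_def sum_distrib_left algebra_simps)
  hence Bb: "- B \<le> (1/\<theta>) * K + (1/\<theta>) * ln S"
    using dvv th by (simp add: field_simps)
  have "(\<Sum>t=1..T. inner_n n (l t) (\<lambda>i. ones_w n \<theta> w1 l lh t i - w i))
      = (\<Sum>t=1..T. inner_n n (l t) (ones_w n \<theta> w1 l lh t) - (\<Sum>i\<le>n. l t i * w i))"
    by (simp add: inner_n_def algebra_simps sum_subtractf)
  also have "\<dots> = A - B"
  proof -
    have "(\<Sum>t=1..T. \<Sum>i\<le>n. l t i * w i) = (\<Sum>i\<le>n. \<Sum>t=1..T. l t i * w i)" by (rule sum.swap)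
    also have "\<dots> = B" by (simp add: B_def L_def sum_distrib_left mult.commute)
    finally show ?thesis by (simp add: A_def sum_subtractf)
  qed
  also have "\<dots> \<le> (1/\<theta>) * K + (\<theta> / 2) * HS" using Ab Bb by linarith
  finally show ?thesis unfolding K_def HS_def .
qed

end
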